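(* Let $T$ be a tree on $n\ge 2$ vertices, $k\ge 3$ odd, and $M$ the order-$k$ Steiner distance hypermatrix of $T$. Then $M(\mathbf{c},\ldots,\mathbf{c})=0$ for every $\mathbf{c}\in\mathcal{H}_n$.
   Context: $T$ is a tree with vertex set $\{1,\dots,n\}$. For $U\subseteq V(T)$, the Steiner distance $S(U)$ is the minimum number of edges of a connected subgraph of $T$ whose vertex set contains $U$. The order-$k$ Steiner distance hypermatrix $M$ has entries $M_{(i_1,\dots,i_k)}=S(\{i_1,\dots,i_k\})$, and $M(\mathbf{x}_1,\dots,\mathbf{x}_k)=\sum_{\mathbf{i}\in V(T)^k}M_{\mathbf{i}}\prod_{j=1}^k x_{j i_j}$. $\mathcal{H}_n=\{\mathbf{c}\in\mathbb{R}^n:\sum_i c_i=0\}$. *)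

theory Defs
  imports Complex_Main "HOL-Library.FuncSet"
begin

definition adj :: "nat set set \<Rightarrow> nat \<Rightarrow> nat \<Rightarrow> bool" where
  "adj F x y \<longleftrightarrow> {x, y} \<in> F"

definition is_graph :: "nat set \<Rightarrow> nat set set \<Rightarrow> bool" where
  "is_graph V E \<longleftrightarrow> (\<forall>e\<in>E. \<exists>x y. x \<noteq> y \<and> x \<in> V \<and> y \<in> V \<and> e = {x, y})"

definition connected_graph :: "nat set \<Rightarrow> nat set set \<Rightarrow> bool" where
  "connected_graph V E \<longleftrightarrow> V \<noteq> {} \<and> (\<forall>x\<in>V. \<forall>y\<in>V. (adj E)\<^sup>*\<^sup>* x y)"

definition is_tree :: "nat set \<Rightarrow> nat set set \<Rightarrow> bool" where
  "is_tree V E \<longleftrightarrow> finite V \<and> is_graph V E \<and> connected_graph V E \<and>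
     (\<forall>e\<in>E. \<not> connected_graph V (E - {e}))"

definition steiner_dist :: "nat set \<Rightarrow> nat set set \<Rightarrow> nat set \<Rightarrow> nat" where
  "steiner_dist V E U = (LEAST m. \<exists>W F. W \<subseteq> V \<and> F \<subseteq> E \<and> is_graph W F \<and>
      connected_graph W F \<and> U \<subseteq> W \<and> card F = m)"

text \<open>The multilinear form M(c,...,c) of the order-k Steiner distance hypermatrix,
  with index tuples (i_0,...,i_{k-1}) in {1..n}^k represented as extensional functions.\<close>
definition steiner_form :: "nat \<Rightarrow> nat set set \<Rightarrow> nat \<Rightarrow> (nat \<Rightarrow> real) \<Rightarrow> real" where
  "steiner_form n E k c = (\<Sum>i\<in>Pi\<^sub>E {..<k} (\<lambda>_. {1..n}).
      real (steiner_dist {1..n} E (i ` {..<k})) * (\<Prod>j<k. c (i j)))"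

end

theory Submission
  imports Defs "HOL-Library.FuncSet"
begin


lemma adj_sym: "adj F a b \<Longrightarrow> adj F b a"
  by (simp add: adj_def insert_commute)

lemma reach_sym: "(adj F)\<^sup>*\<^sup>* a b \<Longrightarrow> (adj F)\<^sup>*\<^sup>* b a"
  by (induction rule: rtranclp_induct) (auto intro: converse_rtranclp_into_rtranclp adj_sym)

lemma reach_mono: "F \<subseteq> G \<Longrightarrow> (adj F)\<^sup>*\<^sup>* a b \<Longrightarrow> (adj G)\<^sup>*\<^sup>* a b"
proof -
  assume "F \<subseteq> G" "(adj F)\<^sup>*\<^sup>* a b"
  moreover have "adj F \<le> adj G" using \<open>F \<subseteq> G\<close> by (auto simp: adj_def)
  ultimately show ?thesis by (metis rtranclp_mono predicate2D)
qed

lemma reach_split: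
  assumes "(adj F)\<^sup>*\<^sup>* v t"
  shows "(adj (F-{{x,y}}))\<^sup>*\<^sup>* v t \<or> (adj (F-{{x,y}}))\<^sup>*\<^sup>* v x \<or> (adj (F-{{x,y}}))\<^sup>*\<^sup>* v y"
  using assms
proof (induction rule: converse_rtranclp_induct)
  case base then show ?case by simp
next
  case (step a b)
  show ?case
  proof (cases "{a,b} = {x,y}")
    case True
    then have "a = x \<or> a = y" by (metis insertCI insert_absorb insert_iff singleton_insert_inj_eq')
    then show ?thesis by auto
  next
    case False
    then have "adj (F-{{x,y}}) a b" using step(1) by (auto simp: adj_def)
    then show ?thesis using step(3) by (meson converse_rtranclp_into_rtranclp)
  qed
qed

lemma finite_E: "is_tree V E \<Longrightarrow> finite E"
proof -
  assume t: "is_tree V E"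
  then have "E \<subseteq> Pow V" unfolding is_tree_def is_graph_def by auto
  moreover have "finite V" using t by (simp add: is_tree_def)
  ultimately show ?thesis by (meson finite_Pow_iff finite_subset)
qed

lemma bridge:
  assumes t: "is_tree V E" and e: "{x,y} \<in> E"
  shows "\<not> (adj (E-{{x,y}}))\<^sup>*\<^sup>* x y"
proof
  assume xy: "(adj (E-{{x,y}}))\<^sup>*\<^sup>* x y"
  have step: "(adj (E-{{x,y}}))\<^sup>*\<^sup>* a b" if "adj E a b" for a b
  proof (cases "{a,b} = {x,y}")
    case True
    then have "(a = x \<and> b = y) \<or> (a = y \<and> b = x) \<or> (a = b)"
      by (metis doubleton_eq_iff)
    then show ?thesis using xy reach_sym by auto
  next
    case False
    then have "adj (E-{{x,y}}) a b" using that by (simp add: adj_def)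
    then show ?thesis by blast
  qed
  have all: "(adj (E-{{x,y}}))\<^sup>*\<^sup>* a b" if "(adj E)\<^sup>*\<^sup>* a b" for a b
    using that by (induction rule: rtranclp_induct) (auto intro: rtranclp_trans step)
  have "connected_graph V (E - {{x,y}})"
    using t all unfolding is_tree_def connected_graph_def by blast
  then show False using t e unfolding is_tree_def by blast
qed

definition feas where
  "feas V E U W F \<longleftrightarrow> W \<subseteq> V \<and> F \<subseteq> E \<and> is_graph W F \<and> connected_graph W F \<and> U \<subseteq> W"

lemma stay:
  assumes "(adj (F-{e}))\<^sup>*\<^sup>* v t" "(adj (E-{e}))\<^sup>*\<^sup>* x v" "F \<subseteq> E"
  shows "(adj {f\<in>F. f \<subseteq> {w. (adj (E-{e}))\<^sup>*\<^sup>* x w}})\<^sup>*\<^sup>* v t \<and> (adj (E-{e}))\<^sup>*\<^sup>* x t"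
  using assms(1)
proof (induction rule: rtranclp_induct)
  case base then show ?case using assms by simp
next
  case (step t t')
  have "adj (E-{e}) t t'" using step(2) assms(3) by (auto simp: adj_def)
  then have t': "(adj (E-{e}))\<^sup>*\<^sup>* x t'" using step(3) by (meson rtranclp.rtrancl_into_rtrancl)
  have inF: "{t,t'} \<in> F" using step(2) by (simp add: adj_def)
  have "{t,t'} \<subseteq> {w. (adj (E-{e}))\<^sup>*\<^sup>* x w}" using step(3) t' by simp
  then have "adj {f\<in>F. f \<subseteq> {w. (adj (E-{e}))\<^sup>*\<^sup>* x w}} t t'"
    using inF by (simp add: adj_def)
  then show ?case using step(3) t' by (meson rtranclp.rtrancl_into_rtrancl)
qed

lemma shrink:
  assumes t: "is_tree V E" and e: "{x,y} \<in> E" and f: "feas V E U W F" and eF: "{x,y} \<in> F"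
    and U: "U \<subseteq> {v. (adj (E-{{x,y}}))\<^sup>*\<^sup>* x v}"
  shows "\<exists>W' F'. feas V E U W' F' \<and> card F' < card F"
proof -
  define A where "A = {v. (adj (E-{{x,y}}))\<^sup>*\<^sup>* x v}"
  define W' where "W' = W \<inter> A"
  define F' where "F' = {f\<in>F. f \<subseteq> A}"
  have yA: "y \<notin> A" using bridge[OF t e] by (simp add: A_def)
  have FE: "F \<subseteq> E" and gW: "is_graph W F" and cW: "connected_graph W F" and UW: "U \<subseteq> W" and WV: "W \<subseteq> V"
    using f by (auto simp: feas_def)
  have finF: "finite F" using finite_E[OF t] FE finite_subset by blast
  have "{x,y} \<notin> F'" using yA by (auto simp: F'_def)
  moreover have "F' \<subseteq> F" by (auto simp: F'_def)
  ultimately have "F' \<subset> F" using eF by blast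
  then have card: "card F' < card F" using finF by (simp add: psubset_card_mono)
  have xW: "x \<in> W" using gW eF unfolding is_graph_def by (metis doubleton_eq_iff)
  have xA: "x \<in> A" by (simp add: A_def)
  have g': "is_graph W' F'" unfolding is_graph_def
  proof
    fix f assume "f \<in> F'"
    then have fF: "f \<in> F" and fA: "f \<subseteq> A" by (auto simp: F'_def)
    then obtain p q where "p \<noteq> q" "p \<in> W" "q \<in> W" "f = {p,q}" using gW unfolding is_graph_def by blast
    then show "\<exists>p q. p \<noteq> q \<and> p \<in> W' \<and> q \<in> W' \<and> f = {p, q}" using fA unfolding W'_def by blast
  qed
  have tox: "(adj F')\<^sup>*\<^sup>* v x" if v: "v \<in> W'" for v
  proof -
    have "(adj F)\<^sup>*\<^sup>* v x" using cW v xW by (auto simp: connected_graph_def W'_def)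
    then have r: "(adj (F-{{x,y}}))\<^sup>*\<^sup>* v x \<or> (adj (F-{{x,y}}))\<^sup>*\<^sup>* v y" using reach_split by blast
    have vA: "(adj (E-{{x,y}}))\<^sup>*\<^sup>* x v" using v by (simp add: W'_def A_def)
    have "\<not> (adj (F-{{x,y}}))\<^sup>*\<^sup>* v y"
    proof
      assume "(adj (F-{{x,y}}))\<^sup>*\<^sup>* v y"
      then have "(adj (E-{{x,y}}))\<^sup>*\<^sup>* v y" using FE reach_mono[of "F-{{x,y}}" "E-{{x,y}}"] by blast
      then show False using vA yA by (simp add: A_def) (meson rtranclp_trans)
    qed
    then have "(adj (F-{{x,y}}))\<^sup>*\<^sup>* v x" using r by blast
    from stay[OF this vA FE] show ?thesis by (simp add: F'_def A_def)
  qed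
  have c': "connected_graph W' F'"
    unfolding connected_graph_def
  proof
    show "W' \<noteq> {}" using xW xA by (auto simp: W'_def)
    show "\<forall>a\<in>W'. \<forall>b\<in>W'. (adj F')\<^sup>*\<^sup>* a b"
    proof (intro ballI)
      fix a b assume "a \<in> W'" "b \<in> W'"
      then have "(adj F')\<^sup>*\<^sup>* a x" "(adj F')\<^sup>*\<^sup>* x b" using tox reach_sym by blast+
      then show "(adj F')\<^sup>*\<^sup>* a b" by (rule rtranclp_trans)
    qed
  qed
  have "W' \<subseteq> V" using WV by (auto simp: W'_def)
  moreover have "F' \<subseteq> E" using FE by (auto simp: F'_def)
  moreover have "U \<subseteq> W'" using UW U unfolding W'_def A_def by blast
  ultimately have "feas V E U W' F'" unfolding feas_def using g' c' by blast
  then show ?thesis using card by blast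
qed



definition side :: "nat set set \<Rightarrow> nat set \<Rightarrow> nat set" where
  "side E e = {v. (adj (E-{e}))\<^sup>*\<^sup>* (SOME x. x \<in> e) v}"

lemma edge_form:
  assumes "is_tree V E" "e \<in> E"
  shows "\<exists>y. e = {SOME x. x \<in> e, y}"
proof -
  obtain p q where e: "e = {p,q}" using assms unfolding is_tree_def is_graph_def by blast
  have "(SOME x. x \<in> e) \<in> e" using e by (metis insertI1 someI_ex)
  then show ?thesis using e by (metis insert_commute insert_iff singletonD)
qed

lemma steiner_eq:
  assumes t: "is_tree V E" and UV: "U \<subseteq> V"
  shows "steiner_dist V E U = card {e\<in>E. U \<inter> side E e \<noteq> {} \<and> \<not> U \<subseteq> side E e}"
proof -
  define P where "P = (\<lambda>m. \<exists>W F. feas V E U W F \<and> card F = m)"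
  have sd: "steiner_dist V E U = Least P" unfolding steiner_dist_def P_def feas_def by simp
  have "feas V E U V E" using t UV unfolding feas_def is_tree_def by simp
  then have "P (card E)" by (auto simp: P_def)
  then have "P (Least P)" by (rule LeastI)
  then obtain W F where f: "feas V E U W F" and cF: "card F = Least P" by (auto simp: P_def)
  have minimal: "card F \<le> card F'" if "feas V E U W' F'" for W' F'
    using that cF by (metis (mono_tags) Least_le P_def)
  have FE: "F \<subseteq> E" and cW: "connected_graph W F" and UW: "U \<subseteq> W" using f by (auto simp: feas_def)
  let ?S = "{e\<in>E. U \<inter> side E e \<noteq> {} \<and> \<not> U \<subseteq> side E e}"
  have "?S \<subseteq> F"
  proof
    fix e assume eS: "e \<in> ?S"
    show "e \<in> F"
    proof (rule ccontr)
      assume nF: "e \<notin> F"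
      obtain u w where u: "u \<in> U" "u \<in> side E e" and w: "w \<in> U" "w \<notin> side E e" using eS by blast
      have "(adj F)\<^sup>*\<^sup>* u w" using cW u w UW by (auto simp: connected_graph_def)
      then have "(adj (E-{e}))\<^sup>*\<^sup>* u w" using FE nF reach_mono[of F "E-{e}"] by blast
      then have "w \<in> side E e" using u unfolding side_def by (simp add: rtranclp_trans)
      then show False using w by blast
    qed
  qed
  moreover have "F \<subseteq> ?S"
  proof
    fix e assume eF: "e \<in> F"
    have eE: "e \<in> E" using eF FE by blast
    define x where "x = (SOME x. x \<in> e)"
    obtain y where e: "e = {x,y}" using edge_form[OF t eE] x_def by blast
    have sd: "side E e = {v. (adj (E-{{x,y}}))\<^sup>*\<^sup>* x v}" by (simp add: side_def x_def[symmetric] e[symmetric])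
    show "e \<in> ?S"
    proof (rule ccontr)
      assume "e \<notin> ?S"
      then have c: "U \<subseteq> side E e \<or> U \<inter> side E e = {}" using eE by blast
      show False
      proof (cases "U \<subseteq> side E e")
        case True
        then obtain W' F' where "feas V E U W' F'" "card F' < card F"
          using shrink[OF t eE[unfolded e] f eF[unfolded e]] sd by blast
        then show False using minimal by fastforce
      next
        case False
        then have dis: "U \<inter> side E e = {}" using c by blast
        have "U \<subseteq> {v. (adj (E-{{y,x}}))\<^sup>*\<^sup>* y v}"
        proof
          fix u assume u: "u \<in> U"
          then have uV: "u \<in> V" using UV by blast
          have xV: "x \<in> V" using t eE e unfolding is_tree_def is_graph_def by (metis doubleton_eq_iff)
          have "(adj E)\<^sup>*\<^sup>* u x" using t uV xV unfolding is_tree_def connected_graph_def by blast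
          then have r: "(adj (E-{{x,y}}))\<^sup>*\<^sup>* u x \<or> (adj (E-{{x,y}}))\<^sup>*\<^sup>* u y" using reach_split by blast
          have "\<not> (adj (E-{{x,y}}))\<^sup>*\<^sup>* u x"
          proof
            assume "(adj (E-{{x,y}}))\<^sup>*\<^sup>* u x"
            then have "u \<in> side E e" using sd reach_sym by blast
            then show False using dis u by blast
          qed
          then have "(adj (E-{{x,y}}))\<^sup>*\<^sup>* y u" using r reach_sym by blast
          then show "u \<in> {v. (adj (E-{{y,x}}))\<^sup>*\<^sup>* y v}" by (simp add: insert_commute)
        qed
        moreover have "{y,x} \<in> E" "{y,x} \<in> F" using eE eF e by (auto simp: insert_commute)
        ultimately obtain W' F' where "feas V E U W' F'" "card F' < card F"
          using shrink[OF t _ f] by blast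
        then show False using minimal by fastforce
      qed
    qed
  qed
  ultimately have "F = ?S" by blast
  then show ?thesis using sd cF by simp
qed



lemma sum_pow:
  fixes c :: "nat \<Rightarrow> real"
  assumes "finite S"
  shows "(\<Sum>i\<in>Pi\<^sub>E {..<k} (\<lambda>_. S). \<Prod>j<k. c (i j)) = (sum c S)^k"
  using prod_sum_PiE[of "{..<k}" "\<lambda>_. S" "\<lambda>_ y. c y"] assms by simp

lemma sub_sum:
  fixes g :: "(nat \<Rightarrow> nat) \<Rightarrow> real"
  assumes "finite S" "finite K"
  shows "(\<Sum>i\<in>Pi\<^sub>E K (\<lambda>_. S). if i ` K \<subseteq> A then g i else 0) = (\<Sum>i\<in>Pi\<^sub>E K (\<lambda>_. S \<inter> A). g i)"
proof -
  have "(\<Sum>i\<in>Pi\<^sub>E K (\<lambda>_. S). if i ` K \<subseteq> A then g i else 0) = sum g {i\<in>Pi\<^sub>E K (\<lambda>_. S). i ` K \<subseteq> A}"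
    by (rule sum.inter_filter[symmetric]) (use assms in \<open>auto intro: finite_PiE\<close>)
  also have "{i\<in>Pi\<^sub>E K (\<lambda>_. S). i ` K \<subseteq> A} = Pi\<^sub>E K (\<lambda>_. S \<inter> A)"
    by (auto simp: PiE_iff extensional_def)
  finally show ?thesis .
qed

theorem mainTheorem3:
  fixes n k :: nat and E :: "nat set set" and c :: "nat \<Rightarrow> real"
  assumes "n \<ge> 2" and "is_tree {1..n} E"
    and "k \<ge> 3" and "odd k"
    and "(\<Sum>i=1..n. c i) = 0"
  shows "steiner_form n E k c = 0"
proof -
  define V where "V = {1..n}"
  define K where "K = {..<k::nat}"
  define P where "P = Pi\<^sub>E K (\<lambda>_. V)"
  define p where "p = (\<lambda>i. \<Prod>j<k. c (i j))"
  have t: "is_tree V E" using assms(2) by (simp add: V_def)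
  have finE: "finite E" using finite_E[OF t] .
  have finV: "finite V" by (simp add: V_def)
  have finP: "finite P" unfolding P_def K_def using finV by (auto intro: finite_PiE)
  have Kne: "K \<noteq> {}" using assms(3) by (simp add: K_def lessThan_empty_iff)
  define Q where "Q = (\<lambda>e (i::nat\<Rightarrow>nat). i ` K \<inter> side E e \<noteq> {} \<and> \<not> i ` K \<subseteq> side E e)"
  have "steiner_form n E k c = (\<Sum>i\<in>P. real (card {e\<in>E. Q e i}) * p i)"
    unfolding steiner_form_def
  proof (rule sum.cong)
    show "Pi\<^sub>E {..<k} (\<lambda>_. {1..n}) = P" by (simp add: P_def K_def V_def)
  next
    fix i assume "i \<in> P"
    then have "i ` K \<subseteq> V" by (auto simp: P_def PiE_iff)
    then show "real (steiner_dist {1..n} E (i ` {..<k})) * (\<Prod>j<k. c (i j)) = real (card {e\<in>E. Q e i}) * p i"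
      using steiner_eq[OF t] by (simp add: V_def K_def Q_def p_def)
  qed
  also have "\<dots> = (\<Sum>i\<in>P. \<Sum>e\<in>E. if Q e i then p i else 0)"
  proof (rule sum.cong[OF refl])
    fix i
    have "real (card {e\<in>E. Q e i}) = (\<Sum>e\<in>E. if Q e i then 1 else 0)"
    proof -
      have "(\<Sum>e\<in>E. if Q e i then 1 else 0) = sum (\<lambda>_. 1::real) {e\<in>E. Q e i}"
        using sum.inter_filter[OF finE, of "\<lambda>_. 1::real" "\<lambda>e. Q e i"] by simp
      then show ?thesis by simp
    qed
    then have "real (card {e\<in>E. Q e i}) * p i = (\<Sum>e\<in>E. (if Q e i then 1 else 0) * p i)"
      by (simp only: sum_distrib_right)
    also have "\<dots> = (\<Sum>e\<in>E. if Q e i then p i else 0)" by (rule sum.cong) auto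
    finally show "real (card {e\<in>E. Q e i}) * p i = (\<Sum>e\<in>E. if Q e i then p i else 0)" .
  qed
  also have "\<dots> = (\<Sum>e\<in>E. \<Sum>i\<in>P. if Q e i then p i else 0)" by (rule sum.swap)
  also have "\<dots> = 0"
  proof (rule sum.neutral, rule ballI)
    fix e assume "e \<in> E"
    define A where "A = side E e"
    have pw: "(if Q e i then p i else 0) = p i - (if i ` K \<subseteq> A then p i else 0) - (if i ` K \<subseteq> V - A then p i else 0)"
      if "i \<in> P" for i
    proof -
      have iV: "i ` K \<subseteq> V" using that by (auto simp: P_def PiE_iff)
      have ne: "i ` K \<noteq> {}" using Kne by simp
      show ?thesis
      proof (cases "i ` K \<subseteq> A")
        case True
        then have "\<not> i ` K \<subseteq> V - A" using ne by blast
        then show ?thesis using True by (simp add: Q_def A_def)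
      next
        case False
        show ?thesis
        proof (cases "i ` K \<inter> A = {}")
          case True
          then have "i ` K \<subseteq> V - A" using iV by blast
          then show ?thesis using True False by (simp add: Q_def A_def)
        next
          case F2: False
          then have "\<not> i ` K \<subseteq> V - A" by blast
          then show ?thesis using F2 False by (simp add: Q_def A_def)
        qed
      qed
    qed
    have "(\<Sum>i\<in>P. if Q e i then p i else 0) = (\<Sum>i\<in>P. p i) - (\<Sum>i\<in>P. if i ` K \<subseteq> A then p i else 0)
        - (\<Sum>i\<in>P. if i ` K \<subseteq> V - A then p i else 0)"
      using pw by (simp add: sum_subtractf)
    also have "\<dots> = (sum c V)^k - (sum c (V \<inter> A))^k - (sum c (V \<inter> (V - A)))^k"
      using sub_sum[OF finV, of K A p] sub_sum[OF finV, of K "V - A" p] finV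
      by (simp add: P_def K_def p_def sum_pow)
    also have "\<dots> = 0"
    proof -
      have s0: "sum c V = 0" using assms(5) by (simp add: V_def)
      have "V \<inter> (V - A) = V - A" by blast
      moreover have "sum c (V - A) = - sum c (V \<inter> A)"
        using sum.Int_Diff[OF finV, of c A] s0 by simp
      ultimately show ?thesis using s0 assms(3,4) by (simp add: power_minus_odd)
    qed
    finally show "(\<Sum>i\<in>P. if Q e i then p i else 0) = 0" .
  qed
  finally show ?thesis .
qed

end
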